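(* Let $\kappa\in\mathbb{K}$, let $(\mathfrak{g},[-,-,-]_\mathfrak{g},\alpha_\mathfrak{g})$ and $(\mathfrak{h},[-,-,-]_\mathfrak{h},\alpha_\mathfrak{h})$ be regular Hom-Lie triple systems, $\theta$ an action of $\mathfrak{g}$ on $\mathfrak{h}$, and $\mathcal{A}:\mathfrak{h}\to\mathfrak{g}$ a $\kappa$-weighted $\mathcal{O}$-operator with respect to $\theta$. Then there is a bijection between the set of equivalence classes of linear deformations of $\mathcal{A}$ and the first cohomology group $\mathcal{H}^1_\mathcal{A}(\mathfrak{h},\mathfrak{g})$.
   Context: All vector spaces are over a field $\mathbb{K}$ of characteristic zero. A Hom-Lie triple system $(\mathfrak{g},[-,-,-]_\mathfrak{g},\alpha_\mathfrak{g})$ is a vector space with a trilinear map $[-,-,-]_\mathfrak{g}$ and a linear map $\alpha_\mathfrak{g}$ with $\alpha_\mathfrak{g}([x,y,z]_\mathfrak{g})=[\alpha_\mathfrak{g}(x),\alpha_\mathfrak{g}(y),\alpha_\mathfrak{g}(z)]_\mathfrak{g}$ such that for all $x,y,z,a,b$: $[x,y,z]_\mathfrak{g}+[y,x,z]_\mathfrak{g}=0$; $[x,y,z]_\mathfrak{g}+[z,x,y]_\mathfrak{g}+[y,z,x]_\mathfrak{g}=0$; $[\alpha_\mathfrak{g}(a),\alpha_\mathfrak{g}(b),[x,y,z]_\mathfrak{g}]_\mathfrak{g}=[[a,b,x]_\mathfrak{g},\alpha_\mathfrak{g}(y),\alpha_\mathfrak{g}(z)]_\mathfrak{g}+[\alpha_\mathfrak{g}(x),[a,b,y]_\mathfrak{g},\alpha_\mathfrak{g}(z)]_\mathfrak{g}+[\alpha_\mathfrak{g}(x),\alpha_\mathfrak{g}(y),[a,b,z]_\mathfrak{g}]_\mathfrak{g}$.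 It is regular if $\alpha_\mathfrak{g}$ is bijective. A homomorphism $\varphi$ of Hom-Lie triple systems satisfies $\varphi\circ\alpha_1=\alpha_2\circ\varphi$ and $\varphi([x,y,z]_1)=[\varphi x,\varphi y,\varphi z]_2$. A representation of $\mathfrak{g}$ on $(V,\beta)$ is a bilinear map $\theta:\mathfrak{g}\times\mathfrak{g}\to\mathrm{End}(V)$ such that, with $D(x,y)=\theta(y,x)-\theta(x,y)$, for all $x,y,a,b$: $\theta(\alpha_\mathfrak{g}(x),\alpha_\mathfrak{g}(y))\circ\beta=\beta\circ\theta(x,y)$; $\theta(\alpha_\mathfrak{g}(a),\alpha_\mathfrak{g}(b))\theta(x,y)-\theta(\alpha_\mathfrak{g}(y),\alpha_\mathfrak{g}(b))\theta(x,a)-\theta(\alpha_\mathfrak{g}(x),[y,a,b]_\mathfrak{g})\circ\beta+D(\alpha_\mathfrak{g}(y),\alpha_\mathfrak{g}(a))\theta(x,b)=0$; $\theta(\alpha_\mathfrak{g}(a),\alpha_\mathfrak{g}(b))D(x,y)-D(\alpha_\mathfrak{g}(x),\alpha_\mathfrak{g}(y))\theta(a,b)+\theta([x,y,a]_\mathfrak{g},\alpha_\mathfrak{g}(b))\circ\beta+\theta(\alpha_\mathfrak{g}(a),[x,y,b]_\mathfrak{g})\circ\beta=0$. An action of $\mathfrak{g}$ on a Hom-Lie triple system $(\mathfrak{h},[-,-,-]_\mathfrak{h},\alpha_\mathfrak{h})$ is a representation $\theta$ of $\mathfrak{g}$ on $(\mathfrak{h},\alpha_\mathfrak{h})$ such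 that for all $x,y\in\mathfrak{g}$, $u,v,w\in\mathfrak{h}$: $\theta(\alpha_\mathfrak{g}(x),\alpha_\mathfrak{g}(y))[u,v,w]_\mathfrak{h}=[\theta(x,y)u,\alpha_\mathfrak{h}(v),\alpha_\mathfrak{h}(w)]_\mathfrak{h}+[\alpha_\mathfrak{h}(u),\theta(x,y)v,\alpha_\mathfrak{h}(w)]_\mathfrak{h}+[\alpha_\mathfrak{h}(u),\alpha_\mathfrak{h}(v),\theta(x,y)w]_\mathfrak{h}$ and $\theta(\alpha_\mathfrak{g}(x),\alpha_\mathfrak{g}(y))[u,v,w]_\mathfrak{h}=[\alpha_\mathfrak{h}(u),\alpha_\mathfrak{h}(v),\theta(x,y)w]_\mathfrak{h}=0$. A $\kappa$-weighted $\mathcal{O}$-operator from $\mathfrak{h}$ to $\mathfrak{g}$ with respect to $\theta$ is a linear map $\mathcal{A}:\mathfrak{h}\to\mathfrak{g}$ with $\mathcal{A}\circ\alpha_\mathfrak{h}=\alpha_\mathfrak{g}\circ\mathcal{A}$ and $[\mathcal{A}u,\mathcal{A}v,\mathcal{A}w]_\mathfrak{g}=\mathcal{A}\big(D(\mathcal{A}u,\mathcal{A}v)w-\theta(\mathcal{A}u,\mathcal{A}w)v+\theta(\mathcal{A}v,\mathcal{A}w)u+\kappa[u,v,w]_\mathfrak{h}\big)$. A homomorphism from such an operator $\mathcal{A}_1$ to another $\mathcal{A}_2$ is a pair of Hom-Lie triple system homomorphisms $\varphi_\mathfrak{h}:\mathfrak{h}\to\mathfrak{h}$, $\varphi_\mathfrak{g}:\mathfrak{g}\to\mathfrak{g}$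 with $\varphi_\mathfrak{g}\circ\mathcal{A}_1=\mathcal{A}_2\circ\varphi_\mathfrak{h}$ and $\varphi_\mathfrak{h}(\theta(x,y)u)=\theta(\varphi_\mathfrak{g}(x),\varphi_\mathfrak{g}(y))\varphi_\mathfrak{h}(u)$. Cohomology: put $\{u,v,w\}_\mathcal{A}=D(\mathcal{A}u,\mathcal{A}v)w-\theta(\mathcal{A}u,\mathcal{A}w)v+\theta(\mathcal{A}v,\mathcal{A}w)u+\kappa[u,v,w]_\mathfrak{h}$, $\theta_\mathcal{A}(u,v)(x)=[x,\mathcal{A}u,\mathcal{A}v]_\mathfrak{g}+\mathcal{A}(\theta(x,\mathcal{A}v)u-D(x,\mathcal{A}u)v)$ and $D_\mathcal{A}(u,v)=\theta_\mathcal{A}(v,u)-\theta_\mathcal{A}(u,v)$. The 1-cocycles $\mathcal{Z}^1_\mathcal{A}(\mathfrak{h},\mathfrak{g})$ are linear maps $f:\mathfrak{h}\to\mathfrak{g}$ with $\alpha_\mathfrak{g}\circ f=f\circ\alpha_\mathfrak{h}$ and $\theta_\mathcal{A}(v_2,v_3)f(v_1)-\theta_\mathcal{A}(v_1,v_3)f(v_2)+D_\mathcal{A}(v_1,v_2)f(v_3)-f(\{v_1,v_2,v_3\}_\mathcal{A})=0$ for all $v_i\in\mathfrak{h}$. For $a,b\in\mathfrak{g}$ with $\alpha_\mathfrak{g}(a)=a,\alpha_\mathfrak{g}(b)=b$ let $\Im(a,b)v=\mathcal{A}(D(a,b)\alpha_\mathfrak{h}^{-1}(v))-[a,b,\mathcal{A}\alpha_\mathfrak{h}^{-1}(v)]_\mathfrak{g}$;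 the 1-coboundaries $\mathcal{B}^1_\mathcal{A}(\mathfrak{h},\mathfrak{g})$ form the span of all such $\Im(a,b)$ (these lie in $\mathcal{Z}^1_\mathcal{A}$), and $\mathcal{H}^1_\mathcal{A}(\mathfrak{h},\mathfrak{g})=\mathcal{Z}^1_\mathcal{A}(\mathfrak{h},\mathfrak{g})/\mathcal{B}^1_\mathcal{A}(\mathfrak{h},\mathfrak{g})$. A linear deformation of $\mathcal{A}$ is $\mathcal{A}_t=\mathcal{A}+t\mathcal{A}_1$ with $\mathcal{A}_1:\mathfrak{h}\to\mathfrak{g}$ linear and $t$ a parameter with $t^2=0$, such that $\mathcal{A}_t$ is a $\kappa$-weighted $\mathcal{O}$-operator (all structures extended $\mathbb{K}[t]/(t^2)$-linearly). Two linear deformations $\mathcal{A}_t=\mathcal{A}+t\mathcal{A}_1$ and $\mathcal{A}'_t=\mathcal{A}+t\mathcal{A}'_1$ are equivalent if there exist $a,b\in\mathfrak{g}$ with $\alpha_\mathfrak{g}(a)=a$, $\alpha_\mathfrak{g}(b)=b$ such that the pair $(\mathrm{Id}_\mathfrak{h}+t\,\alpha_\mathfrak{h}^{-1}\circ D(a,b),\ \mathrm{Id}_\mathfrak{g}+t\,\alpha_\mathfrak{g}^{-1}\circ\mathcal{L}(a,b))$, where $\mathcal{L}(a,b)x=[a,b,x]_\mathfrak{g}$, is a homomorphism from $\mathcal{A}_t$ to $\mathcal{A}'_t$ (the first map playing the role of $\varphi_\mathfrak{h}$, the second of $\varphi_\mathfrak{g}$). *)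

theory Defs
  imports Complex_Main "HOL-Library.Function_Algebras" "HOL-Library.Product_Plus"
begin

text \<open>Vector spaces over a field 'k of characteristic zero are modelled as types
  of class ab_group_add together with a scalar multiplication s satisfying
  the locale vector_space s.\<close>

definition trilinear ::
  "('k::field \<Rightarrow> 'a::ab_group_add \<Rightarrow> 'a) \<Rightarrow> ('a \<Rightarrow> 'a \<Rightarrow> 'a \<Rightarrow> 'a) \<Rightarrow> bool" where
  "trilinear s br \<longleftrightarrow>
     (\<forall>y z. Vector_Spaces.linear s s (\<lambda>x. br x y z)) \<and>
     (\<forall>x z. Vector_Spaces.linear s s (\<lambda>y. br x y z)) \<and>
     (\<forall>x y. Vector_Spaces.linear s s (\<lambda>z. br x y z))"

definition HLTS ::
  "('k::field \<Rightarrow> 'a::ab_group_add \<Rightarrow> 'a) \<Rightarrow> ('a \<Rightarrow> 'a \<Rightarrow> 'a \<Rightarrow> 'a) \<Rightarrow> ('a \<Rightarrow> 'a) \<Rightarrow> bool" where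
  "HLTS s br \<alpha> \<longleftrightarrow>
     vector_space s \<and> trilinear s br \<and> Vector_Spaces.linear s s \<alpha> \<and>
     (\<forall>x y z. \<alpha> (br x y z) = br (\<alpha> x) (\<alpha> y) (\<alpha> z)) \<and>
     (\<forall>x y z. br x y z + br y x z = 0) \<and>
     (\<forall>x y z. br x y z + br z x y + br y z x = 0) \<and>
     (\<forall>a b x y z. br (\<alpha> a) (\<alpha> b) (br x y z) =
          br (br a b x) (\<alpha> y) (\<alpha> z) + br (\<alpha> x) (br a b y) (\<alpha> z)
          + br (\<alpha> x) (\<alpha> y) (br a b z))"

definition regular_HLTS ::
  "('k::field \<Rightarrow> 'a::ab_group_add \<Rightarrow> 'a) \<Rightarrow> ('a \<Rightarrow> 'a \<Rightarrow> 'a \<Rightarrow> 'a) \<Rightarrow> ('a \<Rightarrow> 'a) \<Rightarrow> bool" where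
  "regular_HLTS s br \<alpha> \<longleftrightarrow> HLTS s br \<alpha> \<and> bij \<alpha>"

definition HLTS_hom ::
  "('a \<Rightarrow> 'a \<Rightarrow> 'a \<Rightarrow> 'a) \<Rightarrow> ('a \<Rightarrow> 'a) \<Rightarrow> ('b \<Rightarrow> 'b \<Rightarrow> 'b \<Rightarrow> 'b) \<Rightarrow> ('b \<Rightarrow> 'b)
    \<Rightarrow> ('a \<Rightarrow> 'b) \<Rightarrow> bool" where
  "HLTS_hom br1 \<alpha>1 br2 \<alpha>2 \<phi> \<longleftrightarrow>
     \<phi> \<circ> \<alpha>1 = \<alpha>2 \<circ> \<phi> \<and> (\<forall>x y z. \<phi> (br1 x y z) = br2 (\<phi> x) (\<phi> y) (\<phi> z))"

definition Dop :: "('g \<Rightarrow> 'g \<Rightarrow> 'v \<Rightarrow> 'v::ab_group_add) \<Rightarrow> 'g \<Rightarrow> 'g \<Rightarrow> 'v \<Rightarrow> 'v" where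
  "Dop \<theta> x y v = \<theta> y x v - \<theta> x y v"

definition representation ::
  "('k::field \<Rightarrow> 'g::ab_group_add \<Rightarrow> 'g) \<Rightarrow> ('g \<Rightarrow> 'g \<Rightarrow> 'g \<Rightarrow> 'g) \<Rightarrow> ('g \<Rightarrow> 'g)
   \<Rightarrow> ('k \<Rightarrow> 'v::ab_group_add \<Rightarrow> 'v) \<Rightarrow> ('v \<Rightarrow> 'v) \<Rightarrow> ('g \<Rightarrow> 'g \<Rightarrow> 'v \<Rightarrow> 'v) \<Rightarrow> bool" where
  "representation sg br \<alpha> sV \<beta> \<theta> \<longleftrightarrow>
     vector_space sV \<and> Vector_Spaces.linear sV sV \<beta> \<and>
     (\<forall>x y. Vector_Spaces.linear sV sV (\<theta> x y)) \<and>
     (\<forall>y v. Vector_Spaces.linear sg sV (\<lambda>x. \<theta> x y v)) \<and>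
     (\<forall>x v. Vector_Spaces.linear sg sV (\<lambda>y. \<theta> x y v)) \<and>
     (\<forall>x y v. \<theta> (\<alpha> x) (\<alpha> y) (\<beta> v) = \<beta> (\<theta> x y v)) \<and>
     (\<forall>a b x y v. \<theta> (\<alpha> a) (\<alpha> b) (\<theta> x y v) - \<theta> (\<alpha> y) (\<alpha> b) (\<theta> x a v)
         - \<theta> (\<alpha> x) (br y a b) (\<beta> v) + Dop \<theta> (\<alpha> y) (\<alpha> a) (\<theta> x b v) = 0) \<and>
     (\<forall>a b x y v. \<theta> (\<alpha> a) (\<alpha> b) (Dop \<theta> x y v) - Dop \<theta> (\<alpha> x) (\<alpha> y) (\<theta> a b v)
         + \<theta> (br x y a) (\<alpha> b) (\<beta> v) + \<theta> (\<alpha> a) (br x y b) (\<beta> v) = 0)"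

definition action ::
  "('k::field \<Rightarrow> 'g::ab_group_add \<Rightarrow> 'g) \<Rightarrow> ('g \<Rightarrow> 'g \<Rightarrow> 'g \<Rightarrow> 'g) \<Rightarrow> ('g \<Rightarrow> 'g)
   \<Rightarrow> ('k \<Rightarrow> 'h::ab_group_add \<Rightarrow> 'h) \<Rightarrow> ('h \<Rightarrow> 'h \<Rightarrow> 'h \<Rightarrow> 'h) \<Rightarrow> ('h \<Rightarrow> 'h)
   \<Rightarrow> ('g \<Rightarrow> 'g \<Rightarrow> 'h \<Rightarrow> 'h) \<Rightarrow> bool" where
  "action sg brg \<alpha>g sh brh \<alpha>h \<theta> \<longleftrightarrow>
     representation sg brg \<alpha>g sh \<alpha>h \<theta> \<and>
     (\<forall>x y u v w. \<theta> (\<alpha>g x) (\<alpha>g y) (brh u v w) =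
        brh (\<theta> x y u) (\<alpha>h v) (\<alpha>h w) + brh (\<alpha>h u) (\<theta> x y v) (\<alpha>h w)
        + brh (\<alpha>h u) (\<alpha>h v) (\<theta> x y w)) \<and>
     (\<forall>x y u v w. \<theta> (\<alpha>g x) (\<alpha>g y) (brh u v w) = 0 \<and>
        brh (\<alpha>h u) (\<alpha>h v) (\<theta> x y w) = 0)"

text \<open>The defining identities of a kappa-weighted O-operator (without the
  linearity requirement), stated for arbitrary bracket/twist/action data, so
  that it can be applied both to the original structures and to their
  K[t]/(t^2)-extensions.\<close>
definition O_identities ::
  "('k \<Rightarrow> 'h::ab_group_add \<Rightarrow> 'h) \<Rightarrow> ('g \<Rightarrow> 'g \<Rightarrow> 'g \<Rightarrow> 'g) \<Rightarrow> ('g \<Rightarrow> 'g)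
   \<Rightarrow> ('h \<Rightarrow> 'h \<Rightarrow> 'h \<Rightarrow> 'h) \<Rightarrow> ('h \<Rightarrow> 'h) \<Rightarrow> ('g \<Rightarrow> 'g \<Rightarrow> 'h \<Rightarrow> 'h) \<Rightarrow> 'k
   \<Rightarrow> ('h \<Rightarrow> 'g) \<Rightarrow> bool" where
  "O_identities sh brg \<alpha>g brh \<alpha>h \<theta> \<kappa> A \<longleftrightarrow>
     A \<circ> \<alpha>h = \<alpha>g \<circ> A \<and>
     (\<forall>u v w. brg (A u) (A v) (A w) =
        A (Dop \<theta> (A u) (A v) w - \<theta> (A u) (A w) v + \<theta> (A v) (A w) u + sh \<kappa> (brh u v w)))"

definition O_operator ::
  "('k::field \<Rightarrow> 'g::ab_group_add \<Rightarrow> 'g) \<Rightarrow> ('g \<Rightarrow> 'g \<Rightarrow> 'g \<Rightarrow> 'g) \<Rightarrow> ('g \<Rightarrow> 'g)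
   \<Rightarrow> ('k \<Rightarrow> 'h::ab_group_add \<Rightarrow> 'h) \<Rightarrow> ('h \<Rightarrow> 'h \<Rightarrow> 'h \<Rightarrow> 'h) \<Rightarrow> ('h \<Rightarrow> 'h)
   \<Rightarrow> ('g \<Rightarrow> 'g \<Rightarrow> 'h \<Rightarrow> 'h) \<Rightarrow> 'k \<Rightarrow> ('h \<Rightarrow> 'g) \<Rightarrow> bool" where
  "O_operator sg brg \<alpha>g sh brh \<alpha>h \<theta> \<kappa> A \<longleftrightarrow>
     Vector_Spaces.linear sh sg A \<and> O_identities sh brg \<alpha>g brh \<alpha>h \<theta> \<kappa> A"

definition O_hom ::
  "('g \<Rightarrow> 'g \<Rightarrow> 'g \<Rightarrow> 'g) \<Rightarrow> ('g \<Rightarrow> 'g) \<Rightarrow> ('h \<Rightarrow> 'h \<Rightarrow> 'h \<Rightarrow> 'h) \<Rightarrow> ('h \<Rightarrow> 'h)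
   \<Rightarrow> ('g \<Rightarrow> 'g \<Rightarrow> 'h \<Rightarrow> 'h) \<Rightarrow> ('h \<Rightarrow> 'g) \<Rightarrow> ('h \<Rightarrow> 'g) \<Rightarrow> ('h \<Rightarrow> 'h) \<Rightarrow> ('g \<Rightarrow> 'g) \<Rightarrow> bool" where
  "O_hom brg \<alpha>g brh \<alpha>h \<theta> A1 A2 \<phi>h \<phi>g \<longleftrightarrow>
     HLTS_hom brh \<alpha>h brh \<alpha>h \<phi>h \<and> HLTS_hom brg \<alpha>g brg \<alpha>g \<phi>g \<and>
     \<phi>g \<circ> A1 = A2 \<circ> \<phi>h \<and>
     (\<forall>x y u. \<phi>h (\<theta> x y u) = \<theta> (\<phi>g x) (\<phi>g y) (\<phi>h u))"

text \<open>An element x0 + t x1 of V[t]/(t^2) is represented by the pair (x0, x1).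
  All structures are extended K[t]/(t^2)-(multi)linearly, using t^2 = 0.\<close>

definition ext_br :: "('a::ab_group_add \<Rightarrow> 'a \<Rightarrow> 'a \<Rightarrow> 'a) \<Rightarrow> 'a \<times> 'a \<Rightarrow> 'a \<times> 'a \<Rightarrow> 'a \<times> 'a \<Rightarrow> 'a \<times> 'a" where
  "ext_br br x y z = (br (fst x) (fst y) (fst z),
      br (snd x) (fst y) (fst z) + br (fst x) (snd y) (fst z) + br (fst x) (fst y) (snd z))"

definition ext_map :: "('a \<Rightarrow> 'b) \<Rightarrow> 'a \<times> 'a \<Rightarrow> 'b \<times> 'b" where
  "ext_map f x = (f (fst x), f (snd x))"

definition ext_scale :: "('k \<Rightarrow> 'a \<Rightarrow> 'a) \<Rightarrow> 'k \<Rightarrow> 'a \<times> 'a \<Rightarrow> 'a \<times> 'a" where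
  "ext_scale s c x = (s c (fst x), s c (snd x))"

definition ext_theta :: "('g \<Rightarrow> 'g \<Rightarrow> 'h \<Rightarrow> 'h::ab_group_add) \<Rightarrow> 'g \<times> 'g \<Rightarrow> 'g \<times> 'g \<Rightarrow> 'h \<times> 'h \<Rightarrow> 'h \<times> 'h" where
  "ext_theta \<theta> x y u = (\<theta> (fst x) (fst y) (fst u),
      \<theta> (snd x) (fst y) (fst u) + \<theta> (fst x) (snd y) (fst u) + \<theta> (fst x) (fst y) (snd u))"

text \<open>The map f0 + t f1 (f0, f1 K-linear) acting on V[t]/(t^2).\<close>
definition ext_lin :: "('a \<Rightarrow> 'b::ab_group_add) \<Rightarrow> ('a \<Rightarrow> 'b) \<Rightarrow> 'a \<times> 'a \<Rightarrow> 'b \<times> 'b" where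
  "ext_lin f0 f1 x = (f0 (fst x), f0 (snd x) + f1 (fst x))"

text \<open>A linear deformation A + t A1 is identified with the linear map A1.\<close>
definition linear_deformations ::
  "('k::field \<Rightarrow> 'g::ab_group_add \<Rightarrow> 'g) \<Rightarrow> ('g \<Rightarrow> 'g \<Rightarrow> 'g \<Rightarrow> 'g) \<Rightarrow> ('g \<Rightarrow> 'g)
   \<Rightarrow> ('k \<Rightarrow> 'h::ab_group_add \<Rightarrow> 'h) \<Rightarrow> ('h \<Rightarrow> 'h \<Rightarrow> 'h \<Rightarrow> 'h) \<Rightarrow> ('h \<Rightarrow> 'h)
   \<Rightarrow> ('g \<Rightarrow> 'g \<Rightarrow> 'h \<Rightarrow> 'h) \<Rightarrow> 'k \<Rightarrow> ('h \<Rightarrow> 'g) \<Rightarrow> ('h \<Rightarrow> 'g) set" where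
  "linear_deformations sg brg \<alpha>g sh brh \<alpha>h \<theta> \<kappa> A =
     {A1. Vector_Spaces.linear sh sg A1 \<and>
          O_identities (ext_scale sh) (ext_br brg) (ext_map \<alpha>g) (ext_br brh) (ext_map \<alpha>h)
             (ext_theta \<theta>) \<kappa> (ext_lin A A1)}"

definition equivalent_deformations ::
  "('k::field \<Rightarrow> 'g::ab_group_add \<Rightarrow> 'g) \<Rightarrow> ('g \<Rightarrow> 'g \<Rightarrow> 'g \<Rightarrow> 'g) \<Rightarrow> ('g \<Rightarrow> 'g)
   \<Rightarrow> ('k \<Rightarrow> 'h::ab_group_add \<Rightarrow> 'h) \<Rightarrow> ('h \<Rightarrow> 'h \<Rightarrow> 'h \<Rightarrow> 'h) \<Rightarrow> ('h \<Rightarrow> 'h)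
   \<Rightarrow> ('g \<Rightarrow> 'g \<Rightarrow> 'h \<Rightarrow> 'h) \<Rightarrow> 'k \<Rightarrow> ('h \<Rightarrow> 'g) \<Rightarrow> (('h \<Rightarrow> 'g) \<times> ('h \<Rightarrow> 'g)) set" where
  "equivalent_deformations sg brg \<alpha>g sh brh \<alpha>h \<theta> \<kappa> A =
     {(A1, A1'). A1 \<in> linear_deformations sg brg \<alpha>g sh brh \<alpha>h \<theta> \<kappa> A \<and>
                 A1' \<in> linear_deformations sg brg \<alpha>g sh brh \<alpha>h \<theta> \<kappa> A \<and>
       (\<exists>a b. \<alpha>g a = a \<and> \<alpha>g b = b \<and>
          O_hom (ext_br brg) (ext_map \<alpha>g) (ext_br brh) (ext_map \<alpha>h) (ext_theta \<theta>)
            (ext_lin A A1) (ext_lin A A1')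
            (ext_lin id (\<lambda>u. inv \<alpha>h (Dop \<theta> a b u)))
            (ext_lin id (\<lambda>x. inv \<alpha>g (brg a b x))))}"

definition deformation_classes ::
  "('k::field \<Rightarrow> 'g::ab_group_add \<Rightarrow> 'g) \<Rightarrow> ('g \<Rightarrow> 'g \<Rightarrow> 'g \<Rightarrow> 'g) \<Rightarrow> ('g \<Rightarrow> 'g)
   \<Rightarrow> ('k \<Rightarrow> 'h::ab_group_add \<Rightarrow> 'h) \<Rightarrow> ('h \<Rightarrow> 'h \<Rightarrow> 'h \<Rightarrow> 'h) \<Rightarrow> ('h \<Rightarrow> 'h)
   \<Rightarrow> ('g \<Rightarrow> 'g \<Rightarrow> 'h \<Rightarrow> 'h) \<Rightarrow> 'k \<Rightarrow> ('h \<Rightarrow> 'g) \<Rightarrow> ('h \<Rightarrow> 'g) set set" where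
  "deformation_classes sg brg \<alpha>g sh brh \<alpha>h \<theta> \<kappa> A =
     (let D = linear_deformations sg brg \<alpha>g sh brh \<alpha>h \<theta> \<kappa> A;
          R = equivalent_deformations sg brg \<alpha>g sh brh \<alpha>h \<theta> \<kappa> A
      in D // (Id_on D \<union> (R \<union> R\<inverse>)\<^sup>+))"

definition bracket_A ::
  "('g \<Rightarrow> 'g \<Rightarrow> 'h \<Rightarrow> 'h::ab_group_add) \<Rightarrow> ('k \<Rightarrow> 'h \<Rightarrow> 'h) \<Rightarrow> ('h \<Rightarrow> 'h \<Rightarrow> 'h \<Rightarrow> 'h)
   \<Rightarrow> 'k \<Rightarrow> ('h \<Rightarrow> 'g) \<Rightarrow> 'h \<Rightarrow> 'h \<Rightarrow> 'h \<Rightarrow> 'h" where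
  "bracket_A \<theta> sh brh \<kappa> A u v w =
     Dop \<theta> (A u) (A v) w - \<theta> (A u) (A w) v + \<theta> (A v) (A w) u + sh \<kappa> (brh u v w)"

definition theta_A ::
  "('g \<Rightarrow> 'g \<Rightarrow> 'g \<Rightarrow> 'g::ab_group_add) \<Rightarrow> ('g \<Rightarrow> 'g \<Rightarrow> 'h \<Rightarrow> 'h::ab_group_add)
   \<Rightarrow> ('h \<Rightarrow> 'g) \<Rightarrow> 'h \<Rightarrow> 'h \<Rightarrow> 'g \<Rightarrow> 'g" where
  "theta_A brg \<theta> A u v x = brg x (A u) (A v) + A (\<theta> x (A v) u - Dop \<theta> x (A u) v)"

definition D_A ::
  "('g \<Rightarrow> 'g \<Rightarrow> 'g \<Rightarrow> 'g::ab_group_add) \<Rightarrow> ('g \<Rightarrow> 'g \<Rightarrow> 'h \<Rightarrow> 'h::ab_group_add)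
   \<Rightarrow> ('h \<Rightarrow> 'g) \<Rightarrow> 'h \<Rightarrow> 'h \<Rightarrow> 'g \<Rightarrow> 'g" where
  "D_A brg \<theta> A u v x = theta_A brg \<theta> A v u x - theta_A brg \<theta> A u v x"

definition cocycles1 ::
  "('k::field \<Rightarrow> 'g::ab_group_add \<Rightarrow> 'g) \<Rightarrow> ('g \<Rightarrow> 'g \<Rightarrow> 'g \<Rightarrow> 'g) \<Rightarrow> ('g \<Rightarrow> 'g)
   \<Rightarrow> ('k \<Rightarrow> 'h::ab_group_add \<Rightarrow> 'h) \<Rightarrow> ('h \<Rightarrow> 'h \<Rightarrow> 'h \<Rightarrow> 'h) \<Rightarrow> ('h \<Rightarrow> 'h)
   \<Rightarrow> ('g \<Rightarrow> 'g \<Rightarrow> 'h \<Rightarrow> 'h) \<Rightarrow> 'k \<Rightarrow> ('h \<Rightarrow> 'g) \<Rightarrow> ('h \<Rightarrow> 'g) set" where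
  "cocycles1 sg brg \<alpha>g sh brh \<alpha>h \<theta> \<kappa> A =
     {f. Vector_Spaces.linear sh sg f \<and> \<alpha>g \<circ> f = f \<circ> \<alpha>h \<and>
        (\<forall>v1 v2 v3. theta_A brg \<theta> A v2 v3 (f v1) - theta_A brg \<theta> A v1 v3 (f v2)
            + D_A brg \<theta> A v1 v2 (f v3) - f (bracket_A \<theta> sh brh \<kappa> A v1 v2 v3) = 0)}"

definition Im_cob ::
  "('g \<Rightarrow> 'g \<Rightarrow> 'g \<Rightarrow> 'g::ab_group_add) \<Rightarrow> ('h \<Rightarrow> 'h) \<Rightarrow> ('g \<Rightarrow> 'g \<Rightarrow> 'h \<Rightarrow> 'h::ab_group_add)
   \<Rightarrow> ('h \<Rightarrow> 'g) \<Rightarrow> 'g \<Rightarrow> 'g \<Rightarrow> 'h \<Rightarrow> 'g" where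
  "Im_cob brg \<alpha>h \<theta> A a b v = A (Dop \<theta> a b (inv \<alpha>h v)) - brg a b (A (inv \<alpha>h v))"

definition coboundaries1 ::
  "('k::field \<Rightarrow> 'g::ab_group_add \<Rightarrow> 'g) \<Rightarrow> ('g \<Rightarrow> 'g \<Rightarrow> 'g \<Rightarrow> 'g) \<Rightarrow> ('g \<Rightarrow> 'g)
   \<Rightarrow> ('h::ab_group_add \<Rightarrow> 'h) \<Rightarrow> ('g \<Rightarrow> 'g \<Rightarrow> 'h \<Rightarrow> 'h) \<Rightarrow> ('h \<Rightarrow> 'g) \<Rightarrow> ('h \<Rightarrow> 'g) set" where
  "coboundaries1 sg brg \<alpha>g \<alpha>h \<theta> A =
     module.span (\<lambda>c f. \<lambda>v. sg c (f v))
       {Im_cob brg \<alpha>h \<theta> A a b | a b. \<alpha>g a = a \<and> \<alpha>g b = b}"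

definition cohomology1 ::
  "('k::field \<Rightarrow> 'g::ab_group_add \<Rightarrow> 'g) \<Rightarrow> ('g \<Rightarrow> 'g \<Rightarrow> 'g \<Rightarrow> 'g) \<Rightarrow> ('g \<Rightarrow> 'g)
   \<Rightarrow> ('k \<Rightarrow> 'h::ab_group_add \<Rightarrow> 'h) \<Rightarrow> ('h \<Rightarrow> 'h \<Rightarrow> 'h \<Rightarrow> 'h) \<Rightarrow> ('h \<Rightarrow> 'h)
   \<Rightarrow> ('g \<Rightarrow> 'g \<Rightarrow> 'h \<Rightarrow> 'h) \<Rightarrow> 'k \<Rightarrow> ('h \<Rightarrow> 'g) \<Rightarrow> ('h \<Rightarrow> 'g) set set" where
  "cohomology1 sg brg \<alpha>g sh brh \<alpha>h \<theta> \<kappa> A =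
     (let Z = cocycles1 sg brg \<alpha>g sh brh \<alpha>h \<theta> \<kappa> A;
          B = coboundaries1 sg brg \<alpha>g \<alpha>h \<theta> A
      in Z // {(f, f'). f \<in> Z \<and> f' \<in> Z \<and> f - f' \<in> B})"

end

theory Submission
  imports Defs
begin

lemma additive_rules:
  fixes f :: "'a::ab_group_add \<Rightarrow> 'b::ab_group_add"
  assumes "\<And>x y. f (x+y) = f x + f y"
  shows "f (x+y) = f x + f y" "f 0 = 0" "f (-x) = - f x" "f (x - y) = f x - f y"
proof -
  interpret additive f by standard (rule assms)
  show "f (x+y) = f x + f y" "f 0 = 0" "f (-x) = - f x" "f (x - y) = f x - f y"
    by (rule add, rule zero, rule minus, rule diff)
qed

lemma lin_add: fixes s1 :: "'k::field \<Rightarrow> 'a::ab_group_add \<Rightarrow> 'a" and s2 :: "'k \<Rightarrow> 'b::ab_group_add \<Rightarrow> 'b"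
  shows "Vector_Spaces.linear s1 s2 f \<Longrightarrow> f (x + y) = f x + f y"
  unfolding Vector_Spaces.linear_iff by blast
lemma lin_scale: fixes s1 :: "'k::field \<Rightarrow> 'a::ab_group_add \<Rightarrow> 'a" and s2 :: "'k \<Rightarrow> 'b::ab_group_add \<Rightarrow> 'b"
  shows "Vector_Spaces.linear s1 s2 f \<Longrightarrow> f (s1 c x) = s2 c (f x)"
  unfolding Vector_Spaces.linear_iff by blast

lemma sum3_0: fixes a b c :: "'a::ab_group_add" assumes h: "a + b + c = 0" shows "a = - b - c"
proof -
  have "a + (b + c) = 0" using h by (simp only: add.assoc)
  then have "a = - (b + c)" by (simp only: eq_neg_iff_add_eq_0)
  then show ?thesis by simp
qed
lemma sum2_0: fixes a b :: "'a::ab_group_add" shows "a + b = 0 \<Longrightarrow> a = - b"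
  by (simp only: eq_neg_iff_add_eq_0)

lemma lin4: fixes a b c d :: "'a::ab_group_add"
  assumes h: "a - b + c + d = 0" shows "b = c + d + a"
proof -
  have "b = b + (a - b + c + d)" using h by simp
  also have "\<dots> = c + d + a" by (simp add: algebra_simps)
  finally show ?thesis .
qed

lemma inv_by: assumes "\<And>x. g (f x) = x" and "f y = z" shows "g z = y"
  using assms by metis

locale ctx =
  fixes sg :: "'k::field_char_0 \<Rightarrow> 'g::ab_group_add \<Rightarrow> 'g"
    and sh :: "'k \<Rightarrow> 'h::ab_group_add \<Rightarrow> 'h"
    and brg :: "'g \<Rightarrow> 'g \<Rightarrow> 'g \<Rightarrow> 'g" and \<alpha>g :: "'g \<Rightarrow> 'g"
    and brh :: "'h \<Rightarrow> 'h \<Rightarrow> 'h \<Rightarrow> 'h" and \<alpha>h :: "'h \<Rightarrow> 'h"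
    and \<theta> :: "'g \<Rightarrow> 'g \<Rightarrow> 'h \<Rightarrow> 'h"
    and \<kappa> :: 'k and A :: "'h \<Rightarrow> 'g"
  assumes G: "regular_HLTS sg brg \<alpha>g"
    and H: "regular_HLTS sh brh \<alpha>h"
    and act: "action sg brg \<alpha>g sh brh \<alpha>h \<theta>"
    and O: "O_operator sg brg \<alpha>g sh brh \<alpha>h \<theta> \<kappa> A"
begin

lemma vsg: "vector_space sg" using G unfolding regular_HLTS_def HLTS_def by blast
lemma vsh: "vector_space sh" using H unfolding regular_HLTS_def HLTS_def by blast
lemma trig: "trilinear sg brg" using G unfolding regular_HLTS_def HLTS_def by blast
lemma trih: "trilinear sh brh" using H unfolding regular_HLTS_def HLTS_def by blast
lemma linag: "Vector_Spaces.linear sg sg \<alpha>g" using G unfolding regular_HLTS_def HLTS_def by blast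
lemma linah: "Vector_Spaces.linear sh sh \<alpha>h" using H unfolding regular_HLTS_def HLTS_def by blast
lemma bijg: "bij \<alpha>g" using G by (simp add: regular_HLTS_def)
lemma bijh: "bij \<alpha>h" using H by (simp add: regular_HLTS_def)
lemma rep: "representation sg brg \<alpha>g sh \<alpha>h \<theta>" using act by (simp add: action_def)
lemma linA: "Vector_Spaces.linear sh sg A" using O by (simp add: O_operator_def)
lemma OA: "O_identities sh brg \<alpha>g brh \<alpha>h \<theta> \<kappa> A" using O by (simp add: O_operator_def)

lemma ag_mult: "\<alpha>g (brg x y z) = brg (\<alpha>g x) (\<alpha>g y) (\<alpha>g z)"
  using G unfolding regular_HLTS_def HLTS_def by blast
lemma ah_mult: "\<alpha>h (brh x y z) = brh (\<alpha>h x) (\<alpha>h y) (\<alpha>h z)"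
  using H unfolding regular_HLTS_def HLTS_def by blast
lemma g_skew: "brg x y z + brg y x z = 0"
  using G unfolding regular_HLTS_def HLTS_def by blast
lemma g_cyc: "brg x y z + brg z x y + brg y z x = 0"
  using G unfolding regular_HLTS_def HLTS_def by blast
lemma g_fund: "brg (\<alpha>g a) (\<alpha>g b) (brg x y z) =
          brg (brg a b x) (\<alpha>g y) (\<alpha>g z) + brg (\<alpha>g x) (brg a b y) (\<alpha>g z)
          + brg (\<alpha>g x) (\<alpha>g y) (brg a b z)"
  using G unfolding regular_HLTS_def HLTS_def by blast

lemma th_ab: "\<theta> (\<alpha>g x) (\<alpha>g y) (\<alpha>h v) = \<alpha>h (\<theta> x y v)"
  using rep unfolding representation_def by blast
lemma th_rep3: "\<theta> (\<alpha>g a) (\<alpha>g b) (Dop \<theta> x y v) - Dop \<theta> (\<alpha>g x) (\<alpha>g y) (\<theta> a b v)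
         + \<theta> (brg x y a) (\<alpha>g b) (\<alpha>h v) + \<theta> (\<alpha>g a) (brg x y b) (\<alpha>h v) = 0"
  using rep unfolding representation_def by blast
lemma act1: "\<theta> (\<alpha>g x) (\<alpha>g y) (brh u v w) =
        brh (\<theta> x y u) (\<alpha>h v) (\<alpha>h w) + brh (\<alpha>h u) (\<theta> x y v) (\<alpha>h w)
        + brh (\<alpha>h u) (\<alpha>h v) (\<theta> x y w)"
  using act unfolding action_def by blast
lemma act2: "\<theta> (\<alpha>g x) (\<alpha>g y) (brh u v w) = 0" "brh (\<alpha>h u) (\<alpha>h v) (\<theta> x y w) = 0"
  using act unfolding action_def by blast+

lemma A_alpha: "A (\<alpha>h u) = \<alpha>g (A u)"
  using OA by (simp add: O_identities_def fun_eq_iff)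
lemma A_O: "brg (A u) (A v) (A w) =
        A (Dop \<theta> (A u) (A v) w - \<theta> (A u) (A w) v + \<theta> (A v) (A w) u + sh \<kappa> (brh u v w))"
  using OA unfolding O_identities_def by blast

lemma invg1 [simp]: "inv \<alpha>g (\<alpha>g x) = x" using bijg by (simp add: bij_def inv_f_f)
lemma invg2 [simp]: "\<alpha>g (inv \<alpha>g x) = x" using bijg by (simp add: bij_def surj_f_inv_f)
lemma invh1 [simp]: "inv \<alpha>h (\<alpha>h x) = x" using bijh by (simp add: bij_def inv_f_f)
lemma invh2 [simp]: "\<alpha>h (inv \<alpha>h x) = x" using bijh by (simp add: bij_def surj_f_inv_f)
lemma inv_g: "\<alpha>g y = z \<Longrightarrow> inv \<alpha>g z = y" by (erule subst) (rule invg1)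
lemma inv_h: "\<alpha>h y = z \<Longrightarrow> inv \<alpha>h z = y" by (erule subst) (rule invh1)

lemma brg_add1: "brg (x+y) z w = brg x z w + brg y z w"
  using trig unfolding trilinear_def by (meson lin_add)
lemma brg_add2: "brg z (x+y) w = brg z x w + brg z y w"
  using trig unfolding trilinear_def by (meson lin_add)
lemma brg_add3: "brg z w (x+y) = brg z w x + brg z w y"
  using trig unfolding trilinear_def by (meson lin_add)
lemma brh_add1: "brh (x+y) z w = brh x z w + brh y z w"
  using trih unfolding trilinear_def by (meson lin_add)
lemma brh_add2: "brh z (x+y) w = brh z x w + brh z y w"
  using trih unfolding trilinear_def by (meson lin_add)
lemma brh_add3: "brh z w (x+y) = brh z w x + brh z w y"
  using trih unfolding trilinear_def by (meson lin_add)
lemma th_add1: "\<theta> (x+y) z w = \<theta> x z w + \<theta> y z w"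
  using rep unfolding representation_def by (meson lin_add)
lemma th_add2: "\<theta> z (x+y) w = \<theta> z x w + \<theta> z y w"
  using rep unfolding representation_def by (meson lin_add)
lemma th_add3: "\<theta> z w (x+y) = \<theta> z w x + \<theta> z w y"
  using rep unfolding representation_def by (meson lin_add)
lemma A_add: "A (x+y) = A x + A y" using linA by (rule lin_add)
lemma ag_add: "\<alpha>g (x+y) = \<alpha>g x + \<alpha>g y" using linag by (rule lin_add)
lemma ah_add: "\<alpha>h (x+y) = \<alpha>h x + \<alpha>h y" using linah by (rule lin_add)
lemma ig_add: "inv \<alpha>g (x+y) = inv \<alpha>g x + inv \<alpha>g y"
  by (rule inv_g) (simp add: ag_add)
lemma ih_add: "inv \<alpha>h (x+y) = inv \<alpha>h x + inv \<alpha>h y"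
  by (rule inv_h) (simp add: ah_add)
lemma sh_add: "sh c (x+y) = sh c x + sh c y"
  using vsh by (simp add: vector_space_def)

lemmas brg1 = additive_rules[of "\<lambda>x. brg x y z" for y z, OF brg_add1]
lemmas brg2 = additive_rules[of "\<lambda>x. brg y x z" for y z, OF brg_add2]
lemmas brg3 = additive_rules[of "\<lambda>x. brg y z x" for y z, OF brg_add3]
lemmas brh1 = additive_rules[of "\<lambda>x. brh x y z" for y z, OF brh_add1]
lemmas brh2 = additive_rules[of "\<lambda>x. brh y x z" for y z, OF brh_add2]
lemmas brh3 = additive_rules[of "\<lambda>x. brh y z x" for y z, OF brh_add3]
lemmas th1 = additive_rules[of "\<lambda>x. \<theta> x y z" for y z, OF th_add1]
lemmas th2 = additive_rules[of "\<lambda>x. \<theta> y x z" for y z, OF th_add2]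
lemmas th3 = additive_rules[of "\<lambda>x. \<theta> y z x" for y z, OF th_add3]
lemmas Ar = additive_rules[of A, OF A_add]
lemmas agr = additive_rules[of \<alpha>g, OF ag_add]
lemmas ahr = additive_rules[of \<alpha>h, OF ah_add]
lemmas igr = additive_rules[of "inv \<alpha>g", OF ig_add]
lemmas ihr = additive_rules[of "inv \<alpha>h", OF ih_add]
lemmas shr = additive_rules[of "sh c" for c, OF sh_add]

lemmas adds = brg1 brg2 brg3 brh1 brh2 brh3 th1 th2 th3 Ar agr ahr igr ihr shr

definition cocyc where
 "cocyc f u v w = theta_A brg \<theta> A v w (f u) - theta_A brg \<theta> A u w (f v) + D_A brg \<theta> A u v (f w) - f (bracket_A \<theta> sh brh \<kappa> A u v w)"

lemma g_cyc': "brg x y z = brg z y x - brg z x y"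
proof -
  have "brg x y z = - brg z x y - brg y z x" using g_cyc[of x y z] by (rule sum3_0)
  moreover have "brg y z x = - brg z y x" using g_skew[of y z x] by (rule sum2_0)
  ultimately show ?thesis by simp
qed

lemma cocyc_alt:
  assumes fadd: "\<And>x y. f (x+y) = f x + f y"
  shows "cocyc f u v w = (brg (f u) (A v) (A w) + brg (A u) (f v) (A w) + brg (A u) (A v) (f w))
    - (f (bracket_A \<theta> sh brh \<kappa> A u v w) + A (Dop \<theta> (f u) (A v) w + Dop \<theta> (A u) (f v) w
       - \<theta> (f u) (A w) v - \<theta> (A u) (f w) v + \<theta> (f v) (A w) u + \<theta> (A v) (f w) u))"
proof -
  have p1: "theta_A brg \<theta> A v w (f u) = brg (f u) (A v) (A w) + A (\<theta> (f u) (A w) v) - A (Dop \<theta> (f u) (A v) w)"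
    unfolding theta_A_def by (simp only: Ar add_diff_eq)
  have p2: "theta_A brg \<theta> A u w (f v) = brg (f v) (A u) (A w) + A (\<theta> (f v) (A w) u) - A (Dop \<theta> (f v) (A u) w)"
    unfolding theta_A_def by (simp only: Ar add_diff_eq)
  have p3: "D_A brg \<theta> A u v (f w) = brg (A u) (A v) (f w) + A (\<theta> (A u) (f w) v) - A (\<theta> (A v) (f w) u)"
    unfolding D_A_def theta_A_def Dop_def g_cyc'[of "A u" "A v" "f w"]
    by (simp only: Ar) (simp add: algebra_simps)
  have s1: "brg (f v) (A u) (A w) = - brg (A u) (f v) (A w)"
    using g_skew[of "f v" "A u" "A w"] by (rule sum2_0)
  have s2: "Dop \<theta> (A u) (f v) w = - Dop \<theta> (f v) (A u) w"
    unfolding Dop_def by simp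
  show ?thesis
    unfolding cocyc_def p1 p2 p3 s1 s2
    by (simp only: Ar) (simp add: algebra_simps)
qed

lemma ext_comm_iff:
  assumes lin: "Vector_Spaces.linear sh sg A1"
  shows "(ext_lin A A1 \<circ> ext_map \<alpha>h = ext_map \<alpha>g \<circ> ext_lin A A1) \<longleftrightarrow> \<alpha>g \<circ> A1 = A1 \<circ> \<alpha>h"
proof -
  have "(ext_lin A A1 \<circ> ext_map \<alpha>h = ext_map \<alpha>g \<circ> ext_lin A A1) \<longleftrightarrow> (\<forall>p q. (A (\<alpha>h p), A (\<alpha>h q) + A1 (\<alpha>h p)) = (\<alpha>g (A p), \<alpha>g (A q + A1 p)))"
    by (auto simp: fun_eq_iff ext_lin_def ext_map_def)
  also have "\<dots> \<longleftrightarrow> (\<forall>p. A1 (\<alpha>h p) = \<alpha>g (A1 p))"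
    by (simp add: A_alpha ag_add)
  finally show ?thesis by (auto simp: fun_eq_iff)
qed

definition defeq where
  "defeq B u v w \<longleftrightarrow> ext_br brg (B u) (B v) (B w) =
        B (Dop (ext_theta \<theta>) (B u) (B v) w - ext_theta \<theta> (B u) (B w) v
          + ext_theta \<theta> (B v) (B w) u + ext_scale sh \<kappa> (ext_br brh u v w))"

definition Mt where
  "Mt A1 p q r = Dop \<theta> (A1 p) (A q) r + Dop \<theta> (A p) (A1 q) r - \<theta> (A1 p) (A r) q
     - \<theta> (A p) (A1 r) q + \<theta> (A1 q) (A r) p + \<theta> (A q) (A1 r) p"

lemma snd_th: "snd (ext_theta \<theta> (ext_lin A A1 p) (ext_lin A A1 q) r) =
   \<theta> (A (fst p)) (A (fst q)) (snd r) + \<theta> (A (snd p)) (A (fst q)) (fst r) + \<theta> (A (fst p)) (A (snd q)) (fst r)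
   + (\<theta> (A1 (fst p)) (A (fst q)) (fst r) + \<theta> (A (fst p)) (A1 (fst q)) (fst r))"
  by (simp add: ext_theta_def ext_lin_def th_add1 th_add2 add_ac)

lemma fst_th: "fst (ext_theta \<theta> (ext_lin A A1 p) (ext_lin A A1 q) r) = \<theta> (A (fst p)) (A (fst q)) (fst r)"
  by (simp add: ext_theta_def ext_lin_def)

lemma sX: "snd (Dop (ext_theta \<theta>) (ext_lin A A1 u) (ext_lin A A1 v) w - ext_theta \<theta> (ext_lin A A1 u) (ext_lin A A1 w) v
          + ext_theta \<theta> (ext_lin A A1 v) (ext_lin A A1 w) u + ext_scale sh \<kappa> (ext_br brh u v w))
   = bracket_A \<theta> sh brh \<kappa> A (snd u) (fst v) (fst w) + bracket_A \<theta> sh brh \<kappa> A (fst u) (snd v) (fst w)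
     + bracket_A \<theta> sh brh \<kappa> A (fst u) (fst v) (snd w) + Mt A1 (fst u) (fst v) (fst w)"
  unfolding Dop_def snd_diff snd_add snd_th bracket_A_def Mt_def
  by (simp add: ext_scale_def ext_br_def shr algebra_simps)

lemma fX: "fst (Dop (ext_theta \<theta>) (ext_lin A A1 u) (ext_lin A A1 v) w - ext_theta \<theta> (ext_lin A A1 u) (ext_lin A A1 w) v
          + ext_theta \<theta> (ext_lin A A1 v) (ext_lin A A1 w) u + ext_scale sh \<kappa> (ext_br brh u v w))
   = bracket_A \<theta> sh brh \<kappa> A (fst u) (fst v) (fst w)"
  unfolding Dop_def fst_diff fst_add fst_th bracket_A_def
  by (simp add: ext_scale_def ext_br_def)

lemma sL: "snd (ext_br brg (ext_lin A A1 u) (ext_lin A A1 v) (ext_lin A A1 w)) =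
     brg (A (snd u)) (A (fst v)) (A (fst w)) + brg (A (fst u)) (A (snd v)) (A (fst w)) + brg (A (fst u)) (A (fst v)) (A (snd w))
     + (brg (A1 (fst u)) (A (fst v)) (A (fst w)) + brg (A (fst u)) (A1 (fst v)) (A (fst w)) + brg (A (fst u)) (A (fst v)) (A1 (fst w)))"
  by (simp add: ext_br_def ext_lin_def brg_add1 brg_add2 brg_add3 add_ac)

lemma fL: "fst (ext_br brg (ext_lin A A1 u) (ext_lin A A1 v) (ext_lin A A1 w)) =
     brg (A (fst u)) (A (fst v)) (A (fst w))"
  by (simp add: ext_br_def ext_lin_def)

lemma A_O': "brg (A p) (A q) (A r) = A (bracket_A \<theta> sh brh \<kappa> A p q r)"
  unfolding bracket_A_def by (rule A_O)

lemma defeq_iff1: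
  assumes lin: "Vector_Spaces.linear sh sg A1"
  shows "defeq (ext_lin A A1) u v w \<longleftrightarrow> cocyc A1 (fst u) (fst v) (fst w) = 0"
proof -
  have a1: "A1 (x+y) = A1 x + A1 y" for x y using lin by (rule lin_add)
  have R: "P = ext_lin A A1 X \<longleftrightarrow> fst P = A (fst X) \<and> snd P = A (snd X) + A1 (fst X)" for P X
    by (auto simp: ext_lin_def prod_eq_iff)
  have "defeq (ext_lin A A1) u v w \<longleftrightarrow>
     snd (ext_br brg (ext_lin A A1 u) (ext_lin A A1 v) (ext_lin A A1 w)) =
     A (snd (Dop (ext_theta \<theta>) (ext_lin A A1 u) (ext_lin A A1 v) w - ext_theta \<theta> (ext_lin A A1 u) (ext_lin A A1 w) v
          + ext_theta \<theta> (ext_lin A A1 v) (ext_lin A A1 w) u + ext_scale sh \<kappa> (ext_br brh u v w)))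
     + A1 (fst (Dop (ext_theta \<theta>) (ext_lin A A1 u) (ext_lin A A1 v) w - ext_theta \<theta> (ext_lin A A1 u) (ext_lin A A1 w) v
          + ext_theta \<theta> (ext_lin A A1 v) (ext_lin A A1 w) u + ext_scale sh \<kappa> (ext_br brh u v w)))"
    unfolding defeq_def R fL fX A_O' by simp
  also have "\<dots> \<longleftrightarrow> brg (A1 (fst u)) (A (fst v)) (A (fst w)) + brg (A (fst u)) (A1 (fst v)) (A (fst w)) + brg (A (fst u)) (A (fst v)) (A1 (fst w))
      = A (Mt A1 (fst u) (fst v) (fst w)) + A1 (bracket_A \<theta> sh brh \<kappa> A (fst u) (fst v) (fst w))"
    unfolding sL sX fX A_O' by (simp only: A_add add.assoc add_left_cancel)
  also have "\<dots> \<longleftrightarrow> cocyc A1 (fst u) (fst v) (fst w) = 0"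
    unfolding cocyc_alt[OF a1] Mt_def by (simp add: add.commute)
  finally show ?thesis .
qed

lemma defeq_iff:
  assumes lin: "Vector_Spaces.linear sh sg A1"
  shows "(\<forall>u v w. defeq (ext_lin A A1) u v w) \<longleftrightarrow> (\<forall>u v w. cocyc A1 u v w = 0)"
  unfolding defeq_iff1[OF lin]
  by (metis fst_conv)

lemma LD_eq: "linear_deformations sg brg \<alpha>g sh brh \<alpha>h \<theta> \<kappa> A = cocycles1 sg brg \<alpha>g sh brh \<alpha>h \<theta> \<kappa> A"
proof -
  have "A1 \<in> linear_deformations sg brg \<alpha>g sh brh \<alpha>h \<theta> \<kappa> A \<longleftrightarrow> A1 \<in> cocycles1 sg brg \<alpha>g sh brh \<alpha>h \<theta> \<kappa> A" for A1
  proof (cases "Vector_Spaces.linear sh sg A1")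
    case True
    show ?thesis
      using ext_comm_iff[OF True] defeq_iff[OF True]
      unfolding linear_deformations_def cocycles1_def O_identities_def defeq_def cocyc_def
      by (simp add: True)
  next
    case False
    then show ?thesis unfolding linear_deformations_def cocycles1_def by simp
  qed
  then show ?thesis by blast
qed

lemma th_sc3: "\<theta> x y (sh c v) = sh c (\<theta> x y v)"
  using rep unfolding representation_def by (meson lin_scale)
lemma th_sc1: "\<theta> (sg c x) y v = sh c (\<theta> x y v)"
  using rep unfolding representation_def by (meson lin_scale)
lemma th_sc2: "\<theta> y (sg c x) v = sh c (\<theta> y x v)"
  using rep unfolding representation_def by (meson lin_scale)
lemma brg_sc1: "brg (sg c x) y z = sg c (brg x y z)"
  using trig unfolding trilinear_def by (meson lin_scale)
lemma brg_sc3: "brg y z (sg c x) = sg c (brg y z x)"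
  using trig unfolding trilinear_def by (meson lin_scale)
lemma A_sc: "A (sh c x) = sg c (A x)" using linA by (rule lin_scale)
lemma ag_sc: "\<alpha>g (sg c x) = sg c (\<alpha>g x)" using linag by (rule lin_scale)
lemma ah_sc: "\<alpha>h (sh c x) = sh c (\<alpha>h x)" using linah by (rule lin_scale)
lemma ig_sc: "inv \<alpha>g (sg c x) = sg c (inv \<alpha>g x)" by (rule inv_g) (simp add: ag_sc)
lemma ih_sc: "inv \<alpha>h (sh c x) = sh c (inv \<alpha>h x)" by (rule inv_h) (simp add: ah_sc)
lemma sg_add: "sg c (x+y) = sg c x + sg c y"
  using vsg by (simp add: vector_space_def)
lemmas sgr = additive_rules[of "sg c" for c, OF sg_add]

lemma inv_brg: "inv \<alpha>g (brg p q r) = brg (inv \<alpha>g p) (inv \<alpha>g q) (inv \<alpha>g r)"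
  by (rule inv_g) (simp add: ag_mult)
lemma inv_th: "inv \<alpha>h (\<theta> p q r) = \<theta> (inv \<alpha>g p) (inv \<alpha>g q) (inv \<alpha>h r)"
  by (rule inv_h) (simp add: th_ab[symmetric])
lemma A_inv: "A (inv \<alpha>h u) = inv \<alpha>g (A u)"
  using inv_g[of "A (inv \<alpha>h u)" "A u"] by (simp add: A_alpha[symmetric])

lemma th_brh0: "\<theta> x y (brh u v w) = 0"
  using act2(1)[of "inv \<alpha>g x" "inv \<alpha>g y"] by simp
lemma brh_th0: "brh u v (\<theta> x y w) = 0"
  using act2(2)[of "inv \<alpha>h u" "inv \<alpha>h v"] by simp
lemma act3: "brh (\<theta> x y u) (\<alpha>h v) (\<alpha>h w) + brh (\<alpha>h u) (\<theta> x y v) (\<alpha>h w) = 0"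
  using act1[of x y u v w] act2(1)[of x y u v w] act2(2)[where u=u and v=v and x=x and y=y and w=w] by simp

context
  fixes a b assumes fa: "\<alpha>g a = a" and fb: "\<alpha>g b = b"
begin

lemma Dop_alpha: "Dop \<theta> a b (\<alpha>h z) = \<alpha>h (Dop \<theta> a b z)"
  using th_ab[of a b z] th_ab[of b a z] fa fb by (simp add: Dop_def ahr)
lemma psih_alt: "inv \<alpha>h (Dop \<theta> a b u) = Dop \<theta> a b (inv \<alpha>h u)"
  by (rule inv_h) (simp add: Dop_alpha[symmetric])
lemma brg_alpha: "brg a b (\<alpha>g z) = \<alpha>g (brg a b z)"
  using ag_mult[of a b z] fa fb by simp
lemma psig_alt: "inv \<alpha>g (brg a b x) = brg a b (inv \<alpha>g x)"
  by (rule inv_g) (simp add: brg_alpha[symmetric])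

lemma psih_br0: "inv \<alpha>h (Dop \<theta> a b (brh u v w)) = 0"
  by (simp add: Dop_def th_brh0 ihr)
lemma psih_der0: "brh (Dop \<theta> a b u) (\<alpha>h v) (\<alpha>h w) + brh (\<alpha>h u) (Dop \<theta> a b v) (\<alpha>h w)
   + brh (\<alpha>h u) (\<alpha>h v) (Dop \<theta> a b w) = 0"
proof -
  have 1: "brh (\<theta> b a u) (\<alpha>h v) (\<alpha>h w) + brh (\<alpha>h u) (\<theta> b a v) (\<alpha>h w) - (brh (\<theta> a b u) (\<alpha>h v) (\<alpha>h w) + brh (\<alpha>h u) (\<theta> a b v) (\<alpha>h w)) = 0"
    using act3[of b a u v w] act3[of a b u v w] by simp
  show ?thesis using 1 by (simp add: Dop_def adds brh_th0 algebra_simps)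
qed
lemma psih_der: "brh (inv \<alpha>h (Dop \<theta> a b u)) v w + brh u (inv \<alpha>h (Dop \<theta> a b v)) w
   + brh u v (inv \<alpha>h (Dop \<theta> a b w)) = 0"
  using psih_der0[of "inv \<alpha>h u" "inv \<alpha>h v" "inv \<alpha>h w"] by (simp add: psih_alt)

lemma psig_der: "inv \<alpha>g (brg a b (brg x y z)) = brg (inv \<alpha>g (brg a b x)) y z
   + brg x (inv \<alpha>g (brg a b y)) z + brg x y (inv \<alpha>g (brg a b z))"
  using arg_cong[where f="inv \<alpha>g", OF g_fund[of a b x y z]] fa fb
  by (simp add: igr inv_brg)

lemma psi_th: "inv \<alpha>h (Dop \<theta> a b (\<theta> x y u)) = \<theta> (inv \<alpha>g (brg a b x)) y u
   + \<theta> x (inv \<alpha>g (brg a b y)) u + \<theta> x y (inv \<alpha>h (Dop \<theta> a b u))"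
proof -
  have "\<theta> x y (Dop \<theta> a b (inv \<alpha>h u)) - Dop \<theta> a b (\<theta> (inv \<alpha>g x) (inv \<alpha>g y) (inv \<alpha>h u))
         + \<theta> (brg a b (inv \<alpha>g x)) y u + \<theta> x (brg a b (inv \<alpha>g y)) u = 0"
    using th_rep3[of "inv \<alpha>g x" "inv \<alpha>g y" a b "inv \<alpha>h u"] fa fb by simp
  then have "Dop \<theta> a b (\<theta> (inv \<alpha>g x) (inv \<alpha>g y) (inv \<alpha>h u)) = \<theta> (brg a b (inv \<alpha>g x)) y u
      + \<theta> x (brg a b (inv \<alpha>g y)) u + \<theta> x y (Dop \<theta> a b (inv \<alpha>h u))"
    by (rule lin4)
  then show ?thesis
    by (simp only: psih_alt psig_alt inv_th)
qed

end


lemma cocyc_cob: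
  assumes Padd: "\<And>x y. P (x+y) = P x + P y" and Qadd: "\<And>x y. Q (x+y) = Q x + Q y"
    and P_th: "\<And>x y u. P (\<theta> x y u) = \<theta> (Q x) y u + \<theta> x (Q y) u + \<theta> x y (P u)"
    and P_br: "\<And>u v w. P (brh u v w) = brh (P u) v w + brh u (P v) w + brh u v (P w)"
    and Q_br: "\<And>x y z. Q (brg x y z) = brg (Q x) y z + brg x (Q y) z + brg x y (Q z)"
    and P_sc: "\<And>u. P (sh \<kappa> u) = sh \<kappa> (P u)"
  shows "cocyc (\<lambda>u. A (P u) - Q (A u)) u v w = 0"
proof -
  note Pr = additive_rules[of P, OF Padd]
  note Qr = additive_rules[of Q, OF Qadd]
  have fadd: "A (P (x+y)) - Q (A (x+y)) = (A (P x) - Q (A x)) + (A (P y) - Q (A y))" for x y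
    by (simp add: Pr Qr adds)
  have e2: "brg (Q (A u)) (A v) (A w) = Q (A (bracket_A \<theta> sh brh \<kappa> A u v w)) - brg (A u) (Q (A v)) (A w) - brg (A u) (A v) (Q (A w))"
    using Q_br[of "A u" "A v" "A w"] A_O[of u v w] unfolding bracket_A_def by (simp add: algebra_simps)
  note e1 = A_O[of "P u" v w] A_O[of u "P v" w] A_O[of u v "P w"]
  show ?thesis
    unfolding cocyc_alt[of "\<lambda>u. A (P u) - Q (A u)", OF fadd]
    apply (simp only: brg1 brg2 brg3 e2 e1)
    apply (simp add: bracket_A_def Dop_def adds Pr Qr P_th P_br P_sc algebra_simps)
    done
qed


lemma Im_scale: "Im_cob brg \<alpha>h \<theta> A (sg c a) b = (\<lambda>v. sg c (Im_cob brg \<alpha>h \<theta> A a b v))"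
  by (simp add: fun_eq_iff Im_cob_def Dop_def th_sc1 th_sc2 brg_sc1 sgr adds A_sc)

lemma cocyc_diff:
  assumes "\<And>x y. f (x+y) = f x + f y" "\<And>x y. g (x+y) = g x + g y"
  shows "cocyc (f - g) u v w = cocyc f u v w - cocyc g u v w"
  using additive_rules[of f, OF assms(1)] additive_rules[of g, OF assms(2)]
  by (simp add: cocyc_def theta_A_def D_A_def Dop_def adds algebra_simps)

lemma Z_diff:
  assumes "f \<in> cocycles1 sg brg \<alpha>g sh brh \<alpha>h \<theta> \<kappa> A" "g \<in> cocycles1 sg brg \<alpha>g sh brh \<alpha>h \<theta> \<kappa> A"
  shows "f - g \<in> cocycles1 sg brg \<alpha>g sh brh \<alpha>h \<theta> \<kappa> A"
proof -
  have lf: "Vector_Spaces.linear sh sg f" and lg: "Vector_Spaces.linear sh sg g"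
    and cf: "\<alpha>g \<circ> f = f \<circ> \<alpha>h" and cg: "\<alpha>g \<circ> g = g \<circ> \<alpha>h"
    and zf: "\<And>u v w. cocyc f u v w = 0" and zg: "\<And>u v w. cocyc g u v w = 0"
    using assms unfolding cocycles1_def cocyc_def by auto
  have fa: "f (x+y) = f x + f y" for x y using lf by (rule lin_add)
  have ga: "g (x+y) = g x + g y" for x y using lg by (rule lin_add)
  have "Vector_Spaces.linear sh sg (f - g)"
    using lf lg vsg vsh unfolding Vector_Spaces.linear_iff
    by (simp add: sgr)
  moreover have "\<alpha>g \<circ> (f - g) = (f - g) \<circ> \<alpha>h"
    using cf cg by (simp add: fun_eq_iff agr)
  moreover have "cocyc (f - g) u v w = 0" for u v w
    by (simp add: cocyc_diff[OF fa ga] zf zg)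
  ultimately show ?thesis unfolding cocycles1_def cocyc_def by auto
qed

context
  fixes a b assumes fa: "\<alpha>g a = a" and fb: "\<alpha>g b = b"
begin

lemma Im_alt: "Im_cob brg \<alpha>h \<theta> A a b v = A (inv \<alpha>h (Dop \<theta> a b v)) - inv \<alpha>g (brg a b (A v))"
  by (simp add: Im_cob_def psih_alt[OF fa fb] psig_alt[OF fa fb] A_inv)

lemma Im_in_Z: "Im_cob brg \<alpha>h \<theta> A a b \<in> cocycles1 sg brg \<alpha>g sh brh \<alpha>h \<theta> \<kappa> A"
proof -
  let ?P = "\<lambda>u. inv \<alpha>h (Dop \<theta> a b u)" and ?Q = "\<lambda>x. inv \<alpha>g (brg a b x)"
  have Palpha: "?P (\<alpha>h u) = \<alpha>h (?P u)" for u by (simp add: Dop_alpha[OF fa fb])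
  have Qalpha: "?Q (\<alpha>g x) = \<alpha>g (?Q x)" for x by (simp add: brg_alpha[OF fa fb])
  have eq: "Im_cob brg \<alpha>h \<theta> A a b = (\<lambda>u. A (?P u) - ?Q (A u))"
    by (simp add: fun_eq_iff Im_alt)
  have "Vector_Spaces.linear sh sg (\<lambda>u. A (?P u) - ?Q (A u))"
    unfolding Vector_Spaces.linear_iff using vsg vsh
    by (simp add: Dop_def adds sgr th_sc3 ih_sc A_sc brg_sc3 ig_sc)
  moreover have "\<alpha>g \<circ> (\<lambda>u. A (?P u) - ?Q (A u)) = (\<lambda>u. A (?P u) - ?Q (A u)) \<circ> \<alpha>h"
    by (simp only: fun_eq_iff comp_def agr(4) Palpha Qalpha A_alpha simp_thms)
  moreover have "cocyc (\<lambda>u. A (?P u) - ?Q (A u)) u v w = 0" for u v w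
  proof (rule cocyc_cob)
    show "?P (x + y) = ?P x + ?P y" for x y by (simp add: Dop_def adds)
    show "?Q (x + y) = ?Q x + ?Q y" for x y by (simp add: adds)
    show "?P (\<theta> x y u) = \<theta> (?Q x) y u + \<theta> x (?Q y) u + \<theta> x y (?P u)" for x y u
      by (rule psi_th[OF fa fb])
    show "?P (brh u v w) = brh (?P u) v w + brh u (?P v) w + brh u v (?P w)" for u v w
      using psih_br0[OF fa fb, of u v w] psih_der[OF fa fb, of u v w] by simp
    show "?Q (brg x y z) = brg (?Q x) y z + brg x (?Q y) z + brg x y (?Q z)" for x y z
      by (rule psig_der[OF fa fb])
    show "?P (sh \<kappa> u) = sh \<kappa> (?P u)" for u
      by (simp only: Dop_def th_sc3 shr(4)[symmetric] ih_sc)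
  qed
  ultimately show ?thesis unfolding eq cocycles1_def cocyc_def by auto
qed


lemma O_hom_iff:
  "O_hom (ext_br brg) (ext_map \<alpha>g) (ext_br brh) (ext_map \<alpha>h) (ext_theta \<theta>)
     (ext_lin A A1) (ext_lin A A1')
     (ext_lin id (\<lambda>u. inv \<alpha>h (Dop \<theta> a b u)))
     (ext_lin id (\<lambda>x. inv \<alpha>g (brg a b x)))
   \<longleftrightarrow> A1 - A1' = Im_cob brg \<alpha>h \<theta> A a b"
proof -
  let ?P = "\<lambda>u. inv \<alpha>h (Dop \<theta> a b u)" and ?Q = "\<lambda>x. inv \<alpha>g (brg a b x)"
  have h1: "ext_lin id ?P \<circ> ext_map \<alpha>h = ext_map \<alpha>h \<circ> ext_lin id ?P"
    by (simp add: fun_eq_iff ext_lin_def ext_map_def ahr Dop_alpha[OF fa fb])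
  have d: "brh (?P x) y z = - brh x (?P y) z - brh x y (?P z)" for x y z
    using psih_der[OF fa fb, of x y z] by (rule sum3_0)
  have h2: "ext_lin id ?P (ext_br brh x y z) = ext_br brh (ext_lin id ?P x) (ext_lin id ?P y) (ext_lin id ?P z)" for x y z
    by (simp add: ext_lin_def ext_br_def brh1 brh2 brh3 psih_br0[OF fa fb] d algebra_simps)
  have h3: "ext_lin id ?Q \<circ> ext_map \<alpha>g = ext_map \<alpha>g \<circ> ext_lin id ?Q"
    by (simp add: fun_eq_iff ext_lin_def ext_map_def agr brg_alpha[OF fa fb])
  have h4: "ext_lin id ?Q (ext_br brg x y z) = ext_br brg (ext_lin id ?Q x) (ext_lin id ?Q y) (ext_lin id ?Q z)" for x y z
    by (simp add: ext_lin_def ext_br_def brg1 brg2 brg3 psig_der[OF fa fb] algebra_simps)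
  have h5: "ext_lin id ?P (ext_theta \<theta> x y u) = ext_theta \<theta> (ext_lin id ?Q x) (ext_lin id ?Q y) (ext_lin id ?P u)" for x y u
    by (simp add: ext_lin_def ext_theta_def th1 th2 th3 psi_th[OF fa fb] algebra_simps)
  have "(ext_lin id ?Q \<circ> ext_lin A A1 = ext_lin A A1' \<circ> ext_lin id ?P) \<longleftrightarrow>
        (\<forall>p q. A q + A1 p + ?Q (A p) = A q + A (?P p) + A1' p)"
    by (auto simp: fun_eq_iff ext_lin_def Ar add.assoc)
  also have "\<dots> \<longleftrightarrow> (\<forall>p. A1 p - A1' p = A (?P p) - ?Q (A p))"
    by (auto simp: algebra_simps)
  also have "\<dots> \<longleftrightarrow> A1 - A1' = Im_cob brg \<alpha>h \<theta> A a b"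
    by (simp add: fun_eq_iff Im_alt)
  finally show ?thesis
    unfolding O_hom_def HLTS_hom_def using h1 h2 h3 h4 h5 by auto
qed

end


lemma R_eq: "equivalent_deformations sg brg \<alpha>g sh brh \<alpha>h \<theta> \<kappa> A =
  {(f,f'). f \<in> cocycles1 sg brg \<alpha>g sh brh \<alpha>h \<theta> \<kappa> A \<and> f' \<in> cocycles1 sg brg \<alpha>g sh brh \<alpha>h \<theta> \<kappa> A \<and>
     (\<exists>a b. \<alpha>g a = a \<and> \<alpha>g b = b \<and> f - f' = Im_cob brg \<alpha>h \<theta> A a b)}"
proof -
  have e: "(\<alpha>g a = a \<and> \<alpha>g b = b \<and> O_hom (ext_br brg) (ext_map \<alpha>g) (ext_br brh) (ext_map \<alpha>h) (ext_theta \<theta>)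
            (ext_lin A f) (ext_lin A f')
            (ext_lin id (\<lambda>u. inv \<alpha>h (Dop \<theta> a b u)))
            (ext_lin id (\<lambda>x. inv \<alpha>g (brg a b x))))
      \<longleftrightarrow> (\<alpha>g a = a \<and> \<alpha>g b = b \<and> f - f' = Im_cob brg \<alpha>h \<theta> A a b)" for a b f f'
    using O_hom_iff by blast
  show ?thesis unfolding equivalent_deformations_def LD_eq e ..
qed

lemma modF: "module (\<lambda>c (f::'h\<Rightarrow>'g) v. sg c (f v))"
  using vsg unfolding vector_space_def module_def by (simp add: fun_eq_iff)

lemma main: "\<exists>F. bij_betw F (deformation_classes sg brg \<alpha>g sh brh \<alpha>h \<theta> \<kappa> A)
                         (cohomology1 sg brg \<alpha>g sh brh \<alpha>h \<theta> \<kappa> A)"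
proof -
  interpret M: module "\<lambda>c (f::'h\<Rightarrow>'g) v. sg c (f v)" by (rule modF)
  define Z where "Z = cocycles1 sg brg \<alpha>g sh brh \<alpha>h \<theta> \<kappa> A"
  define S where "S = {Im_cob brg \<alpha>h \<theta> A a b | a b. \<alpha>g a = a \<and> \<alpha>g b = b}"
  define B where "B = coboundaries1 sg brg \<alpha>g \<alpha>h \<theta> A"
  have B: "B = M.span S" unfolding B_def S_def coboundaries1_def by simp
  define R where "R = equivalent_deformations sg brg \<alpha>g sh brh \<alpha>h \<theta> \<kappa> A"
  have R: "R = {(f,f'). f \<in> Z \<and> f' \<in> Z \<and> (\<exists>a b. \<alpha>g a = a \<and> \<alpha>g b = b \<and> f - f' = Im_cob brg \<alpha>h \<theta> A a b)}"
    unfolding R_def Z_def by (rule R_eq)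
  define Rel where "Rel = {(f, f'). f \<in> Z \<and> f' \<in> Z \<and> f - f' \<in> B}"
  define E where "E = Id_on Z \<union> (R \<union> R\<inverse>)\<^sup>+"
  have SZ: "x \<in> S \<Longrightarrow> x \<in> M.span S" for x by (rule M.span_base)
  have base_rel: "(y, z) \<in> R \<union> R\<inverse> \<Longrightarrow> (y, z) \<in> Rel" for y z
  proof -
    assume "(y, z) \<in> R \<union> R\<inverse>"
    then consider "(y,z) \<in> R" | "(z,y) \<in> R" by auto
    then show ?thesis
    proof cases
      case 1
      then obtain a b where "y \<in> Z" "z \<in> Z" "\<alpha>g a = a" "\<alpha>g b = b" "y - z = Im_cob brg \<alpha>h \<theta> A a b"
        unfolding R by auto
      then show ?thesis unfolding Rel_def B S_def by (auto intro: M.span_base)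
    next
      case 2
      then obtain a b where "y \<in> Z" "z \<in> Z" "\<alpha>g a = a" "\<alpha>g b = b" "z - y = Im_cob brg \<alpha>h \<theta> A a b"
        unfolding R by auto
      then have "y - z = - Im_cob brg \<alpha>h \<theta> A a b" "Im_cob brg \<alpha>h \<theta> A a b \<in> M.span S"
        unfolding S_def by (auto simp: algebra_simps intro!: M.span_base)
      then show ?thesis using \<open>y \<in> Z\<close> \<open>z \<in> Z\<close> unfolding Rel_def B by (auto intro: M.span_neg)
    qed
  qed
  have sub1: "E \<subseteq> Rel"
  proof
    fix p assume "p \<in> E"
    then consider "p \<in> Id_on Z" | "p \<in> (R \<union> R\<inverse>)\<^sup>+" unfolding E_def by auto
    then show "p \<in> Rel"
    proof cases
      case 1 then show ?thesis unfolding Rel_def B by (auto intro: M.span_zero)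
    next
      case 2
      obtain f f' where p: "p = (f, f')" by (cases p)
      from 2 have "(f, f') \<in> (R \<union> R\<inverse>)\<^sup>+" unfolding p .
      then have "(f, f') \<in> Rel"
      proof (induction rule: trancl_induct)
        case (base y) then show ?case by (rule base_rel)
      next
        case (step y z)
        from base_rel[OF step(2)] step(3) have "f - y \<in> B" "y - z \<in> B" "f \<in> Z" "z \<in> Z"
          unfolding Rel_def by auto
        then have "(f - y) + (y - z) \<in> B" unfolding B by (intro M.span_add)
        then show ?case using \<open>f \<in> Z\<close> \<open>z \<in> Z\<close> unfolding Rel_def by (simp add: algebra_simps)
      qed
      then show ?thesis unfolding p .
    qed
  qed
  have key: "g \<in> M.span S \<Longrightarrow> \<forall>f f'. f \<in> Z \<longrightarrow> f' \<in> Z \<longrightarrow> f - f' = g \<longrightarrow> (f, f') \<in> E" for g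
  proof (induction rule: M.span_induct_alt)
    case base
    show ?case
    proof (intro allI impI)
      fix f f' :: "'h \<Rightarrow> 'g" assume "f \<in> Z" "f' \<in> Z" "f - f' = 0"
      then have "f = f'" by (simp only: right_minus_eq)
      then show "(f, f') \<in> E" using \<open>f \<in> Z\<close> unfolding E_def by auto
    qed
  next
    case (step c x y)
    show ?case
    proof (intro allI impI)
      fix f f' assume f: "f \<in> Z" and f': "f' \<in> Z" and d: "f - f' = (\<lambda>v. sg c (x v)) + y"
      from step(1) obtain a b where ab: "\<alpha>g a = a" "\<alpha>g b = b" and x: "x = Im_cob brg \<alpha>h \<theta> A a b"
        unfolding S_def by auto
      define a' where "a' = sg c a"
      have a': "\<alpha>g a' = a'" unfolding a'_def using ab by (simp add: ag_sc)
      have I: "(\<lambda>v. sg c (x v)) = Im_cob brg \<alpha>h \<theta> A a' b" unfolding a'_def x Im_scale ..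
      define f'' where "f'' = f - Im_cob brg \<alpha>h \<theta> A a' b"
      have f'': "f'' \<in> Z" unfolding f''_def Z_def
        using Z_diff f Im_in_Z[OF a' ab(2)] unfolding Z_def by blast
      have r: "(f, f'') \<in> R" unfolding R using f f'' a' ab(2) by (auto simp: f''_def)
      have "f'' - f' = y" using d I unfolding f''_def by (simp add: algebra_simps)
      then have e: "(f'', f') \<in> E" using step(2) f'' f' by blast
      show "(f, f') \<in> E"
      proof (cases "(f'', f') \<in> Id_on Z")
        case True then have "f'' = f'" by auto
        then show ?thesis using r unfolding E_def by auto
      next
        case False
        then have "(f'', f') \<in> (R \<union> R\<inverse>)\<^sup>+" using e unfolding E_def by auto
        moreover have "(f, f'') \<in> (R \<union> R\<inverse>)\<^sup>+" using r by auto
        ultimately show ?thesis unfolding E_def by (meson UnI2 trancl_trans)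
      qed
    qed
  qed
  have sub2: "Rel \<subseteq> E"
  proof
    fix p assume "p \<in> Rel"
    then obtain f f' where p: "p = (f, f')" "f \<in> Z" "f' \<in> Z" "f - f' \<in> M.span S"
      unfolding Rel_def B by auto
    then show "p \<in> E" using key[OF p(4)] by auto
  qed
  have "deformation_classes sg brg \<alpha>g sh brh \<alpha>h \<theta> \<kappa> A = Z // E"
    unfolding deformation_classes_def Let_def LD_eq E_def R_def Z_def ..
  also have "\<dots> = Z // Rel" using sub1 sub2 by auto
  also have "\<dots> = cohomology1 sg brg \<alpha>g sh brh \<alpha>h \<theta> \<kappa> A"
    unfolding cohomology1_def Let_def Rel_def Z_def B_def ..
  finally show ?thesis using bij_betw_id by metis
qed

end

theorem mainTheorem6:
  fixes sg :: "'k::field_char_0 \<Rightarrow> 'g::ab_group_add \<Rightarrow> 'g"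
    and sh :: "'k \<Rightarrow> 'h::ab_group_add \<Rightarrow> 'h"
    and brg :: "'g \<Rightarrow> 'g \<Rightarrow> 'g \<Rightarrow> 'g" and \<alpha>g :: "'g \<Rightarrow> 'g"
    and brh :: "'h \<Rightarrow> 'h \<Rightarrow> 'h \<Rightarrow> 'h" and \<alpha>h :: "'h \<Rightarrow> 'h"
    and \<theta> :: "'g \<Rightarrow> 'g \<Rightarrow> 'h \<Rightarrow> 'h"
    and \<kappa> :: 'k and A :: "'h \<Rightarrow> 'g"
  assumes "regular_HLTS sg brg \<alpha>g"
    and "regular_HLTS sh brh \<alpha>h"
    and "action sg brg \<alpha>g sh brh \<alpha>h \<theta>"
    and "O_operator sg brg \<alpha>g sh brh \<alpha>h \<theta> \<kappa> A"
  shows "\<exists>F. bij_betw F (deformation_classes sg brg \<alpha>g sh brh \<alpha>h \<theta> \<kappa> A)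
                         (cohomology1 sg brg \<alpha>g sh brh \<alpha>h \<theta> \<kappa> A)"
proof -
  interpret ctx sg sh brg \<alpha>g brh \<alpha>h \<theta> \<kappa> A
    using assms by unfold_locales
  show ?thesis by (rule main)
qed

end
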